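(* Let $n\ge 4$ and let $D_n$ be the tree obtained from the path on $n-1$ vertices by adding a pendant edge at the second vertex of the path. Then the number of main eigenvalues of $D_n$ is $n-1$ if $4\nmid n$, and $n-2$ if $4\mid n$.
   Context: An eigenvalue of a graph with adjacency matrix $A$ is called main if $A$ has an eigenvector for it that is not orthogonal to the all-ones vector. *)

theory Defs
  imports "Jordan_Normal_Form.Char_Poly"
begin

definition main_eigenvalue :: "real mat \<Rightarrow> real \<Rightarrow> bool" where
  "main_eigenvalue A k = (\<exists>v. eigenvector A v k \<and> v \<bullet> vec (dim_row A) (\<lambda>_. 1) \<noteq> 0)"

text \<open>Vertices 0..n-1. Vertices 0,...,n-2 form the path on n-1 vertices
  (edges i -- i+1); vertex n-1 is a pendant vertex attached to vertex 1,
  the second vertex of the path.\<close>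
definition D_adj :: "nat \<Rightarrow> nat \<Rightarrow> nat \<Rightarrow> bool" where
  "D_adj n i j = ((i < n - 1 \<and> j < n - 1 \<and> (i = j + 1 \<or> j = i + 1))
                  \<or> (i = n - 1 \<and> j = 1) \<or> (i = 1 \<and> j = n - 1))"

definition D_mat :: "nat \<Rightarrow> real mat" where
  "D_mat n = mat n n (\<lambda>(i, j). if D_adj n i j then 1 else 0)"

end

theory Submission
  imports Defs
begin

fun U :: "nat \<Rightarrow> real \<Rightarrow> real" where
  "U 0 k = 1"
| "U (Suc 0) k = k"
| "U (Suc (Suc m)) k = k * U (Suc m) k - U m k"

fun C :: "nat \<Rightarrow> real \<Rightarrow> real" where
  "C 0 k = 2"
| "C (Suc 0) k = k"
| "C (Suc (Suc m)) k = k * C (Suc m) k - C m k"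

fun Up :: "nat \<Rightarrow> real poly" where
  "Up 0 = 1"
| "Up (Suc 0) = [:0,1:]"
| "Up (Suc (Suc m)) = [:0,1:] * Up (Suc m) - Up m"

lemma Up_poly: "poly (Up m) k = U m k"
  by (induction m rule: Up.induct) auto

lemma x_mult: "[:0,1:] * (p::real poly) = pCons 0 p" by simp

lemma Up_deg: "degree (Up m) \<le> m \<and> coeff (Up m) m = 1"
proof (induction m rule: Up.induct)
  case (3 m)
  have d1: "degree (pCons 0 (Up (Suc m))) \<le> Suc (Suc m)"
    using 3 by (metis Suc_le_mono degree_pCons_le le_trans)
  have d2: "degree (Up m) \<le> Suc (Suc m)" using 3 by simp
  have "degree (Up (Suc (Suc m))) \<le> Suc (Suc m)"
    unfolding Up.simps x_mult using d1 d2 degree_diff_le by blast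
  moreover have "coeff (Up m) (Suc (Suc m)) = 0" using 3 by (intro coeff_eq_0) simp
  ultimately show ?case using 3 by (simp add: x_mult)
qed auto

lemma U_sum: "(k - 2) * (\<Sum>j<Suc m. U j k) = U (Suc m) k - U m k - 1"
proof (induction m)
  case (Suc m) then show ?case by (simp add: algebra_simps)
qed simp

lemma U_cassini: "(U (Suc m) k)^2 - U (Suc (Suc m)) k * U m k = 1"
proof (induction m)
  case 0 then show ?case by (simp add: power2_eq_square)
next
  case (Suc m) then show ?case by (simp add: power2_eq_square algebra_simps)
qed

lemma U_zero: "U m 0 = (if odd m then 0 else if m mod 4 = 0 then 1 else -1)"
proof (induction m rule: Up.induct)
  case (3 m)
  have a: "U (Suc (Suc m)) 0 = - U m 0" by simp
  have b: "Suc (Suc m) mod 4 = 0 \<longleftrightarrow> m mod 4 = 2" by presburger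
  have c: "even m \<Longrightarrow> m mod 4 = 0 \<or> m mod 4 = 2" by presburger
  show ?case unfolding a 3 using b c by auto
qed auto

lemma C_cos: "C m (2 * cos t) = 2 * cos (real m * t)"
proof (induction m rule: Up.induct)
  case (3 m)
  have "cos (real (Suc (Suc m)) * t) = 2 * cos t * cos (real (Suc m) * t) - cos (real m * t)"
  proof -
    have a: "real (Suc (Suc m)) * t = real (Suc m) * t + t" "real m * t = real (Suc m) * t - t"
      by (simp_all add: algebra_simps)
    show ?thesis unfolding a cos_add cos_diff by simp
  qed
  then show ?case using 3 by simp
qed auto

lemma UC: "U (Suc (Suc m)) k - U m k = C (Suc (Suc m)) k \<and> U (Suc (Suc (Suc m))) k - U (Suc m) k = C (Suc (Suc (Suc m))) k"
proof (induction m)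
  case 0 then show ?case by (simp add: algebra_simps)
next
  case (Suc m)
  have e1: "U (Suc (Suc (Suc (Suc m)))) k = k * U (Suc (Suc (Suc m))) k - U (Suc (Suc m)) k" by simp
  have e2: "C (Suc (Suc (Suc (Suc m)))) k = k * C (Suc (Suc (Suc m))) k - C (Suc (Suc m)) k" by simp
  have e3: "U (Suc (Suc m)) k = k * U (Suc m) k - U m k" by simp
  have "U (Suc (Suc (Suc (Suc m)))) k - U (Suc (Suc m)) k = C (Suc (Suc (Suc (Suc m)))) k"
    unfolding e1 e2 using Suc.IH[THEN conjunct1, symmetric] Suc.IH[THEN conjunct2, symmetric]
    by (simp only: ) (simp add: e3 algebra_simps)
  then show ?case using Suc.IH by simp
qed

definition nbs :: "nat \<Rightarrow> nat \<Rightarrow> nat set" where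
  "nbs n i = {j. j < n \<and> D_adj n i j}"

lemma mult_row: assumes "v \<in> carrier_vec n" "i < n"
  shows "(D_mat n *\<^sub>v v) $ i = (\<Sum>j\<in>nbs n i. v $ j)"
proof -
  have "(D_mat n *\<^sub>v v) $ i = (\<Sum>j\<in>{0..<n}. (if D_adj n i j then 1 else 0) * v $ j)"
    using assms by (simp add: D_mat_def scalar_prod_def)
  also have "\<dots> = (\<Sum>j\<in>{0..<n}. if D_adj n i j then v $ j else 0)"
    by (intro sum.cong) auto
  also have "\<dots> = (\<Sum>j\<in>nbs n i. v $ j)"
    unfolding nbs_def by (simp add: sum.inter_filter[symmetric])
  finally show ?thesis .
qed

lemma nbs0: "n \<ge> 4 \<Longrightarrow> nbs n 0 = {1}" unfolding nbs_def D_adj_def by auto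
lemma nbs1: "n \<ge> 4 \<Longrightarrow> nbs n 1 = {0,2,n-1}" unfolding nbs_def D_adj_def by auto
lemma nbsl: "n \<ge> 4 \<Longrightarrow> nbs n (n-1) = {1}" unfolding nbs_def D_adj_def by auto
lemma nbsl2: "n \<ge> 4 \<Longrightarrow> nbs n (n-2) = {n-3}" unfolding nbs_def D_adj_def by auto
lemma nbsm: "n \<ge> 4 \<Longrightarrow> 2 \<le> i \<Longrightarrow> i + 3 \<le> n \<Longrightarrow> nbs n i = {i-1,i+1}"
  unfolding nbs_def D_adj_def by auto

lemma sum_nbs1: "n \<ge> 4 \<Longrightarrow> (\<Sum>j\<in>nbs n 1. g j) = g 0 + g 2 + g (n-1)"
proof -
  assume n: "n \<ge> 4"
  have "n - 1 \<noteq> 2" "n - 1 \<noteq> 0" using n by auto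
  then show ?thesis unfolding nbs1[OF n] by (simp add: add.assoc)
qed

lemma sum_nbsm: "n \<ge> 4 \<Longrightarrow> 2 \<le> i \<Longrightarrow> i + 3 \<le> n \<Longrightarrow> (\<Sum>j\<in>nbs n i. g j) = g (i-1) + g (i+1)"
  by (simp add: nbsm)

definition eqs :: "nat \<Rightarrow> (nat \<Rightarrow> real) \<Rightarrow> real \<Rightarrow> bool" where
  "eqs n g k \<longleftrightarrow> g 1 = k * g 0 \<and> g 1 = k * g (n-1) \<and> g 0 + g 2 + g (n-1) = k * g 1 \<and>
     (\<forall>i. 2 \<le> i \<and> i + 3 \<le> n \<longrightarrow> g (i-1) + g (i+1) = k * g i) \<and> g (n-3) = k * g (n-2)"

lemma rows_eqs: assumes n: "n \<ge> 4"
  shows "(\<forall>i<n. (\<Sum>j\<in>nbs n i. g j) = k * g i) \<longleftrightarrow> eqs n g k"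
proof
  assume A: "\<forall>i<n. (\<Sum>j\<in>nbs n i. g j) = k * g i"
  have r0: "g 1 = k * g 0" using A[rule_format, of 0, unfolded nbs0[OF n]] n by simp
  have r1: "g 1 = k * g (n-1)" using A[rule_format, of "n-1", unfolded nbsl[OF n]] n by simp
  have r2: "g 0 + g 2 + g (n-1) = k * g 1" using A[rule_format, of 1, unfolded sum_nbs1[OF n]] n by simp
  have r3: "g (n-3) = k * g (n-2)" using A[rule_format, of "n-2", unfolded nbsl2[OF n]] n by simp
  have r4: "g (i-1) + g (i+1) = k * g i" if "2 \<le> i" "i + 3 \<le> n" for i
    using A[rule_format, of i, unfolded sum_nbsm[OF n that]] n that by simp
  show "eqs n g k" unfolding eqs_def using r0 r1 r2 r3 r4 by blast
next
  assume E: "eqs n g k"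
  show "\<forall>i<n. (\<Sum>j\<in>nbs n i. g j) = k * g i"
  proof (intro allI impI)
    fix i assume i: "i < n"
    consider "i = 0" | "i = n-1" | "i = 1" | "i = n-2" | "2 \<le> i \<and> i + 3 \<le> n" using i n by linarith
    then show "(\<Sum>j\<in>nbs n i. g j) = k * g i"
    proof cases
      case 1
      have "nbs n i = nbs n 0" unfolding 1 ..
      then show ?thesis using E unfolding nbs0[OF n] eqs_def 1 by auto
    next
      case 2
      have "nbs n i = nbs n (n-1)" unfolding 2 ..
      then show ?thesis using E unfolding nbsl[OF n] eqs_def 2 by auto
    next
      case 3 then show ?thesis using E n sum_nbs1[OF n, of g] unfolding eqs_def 3 by simp
    next
      case 4
      have "nbs n i = nbs n (n-2)" unfolding 4 ..
      then show ?thesis using E unfolding nbsl2[OF n] eqs_def 4 by auto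
    next
      case 5 then show ?thesis using E n sum_nbsm[OF n, of i g] unfolding eqs_def by simp
    qed
  qed
qed

lemma mv_eqs: assumes n: "n \<ge> 4" and v: "v \<in> carrier_vec n"
  shows "(D_mat n *\<^sub>v v = k \<cdot>\<^sub>v v) \<longleftrightarrow> eqs n (\<lambda>i. v $ i) k"
proof -
  have "(D_mat n *\<^sub>v v = k \<cdot>\<^sub>v v) \<longleftrightarrow> (\<forall>i<n. (D_mat n *\<^sub>v v) $ i = k * v $ i)"
    using v by (simp add: vec_eq_iff D_mat_def)
  also have "\<dots> \<longleftrightarrow> (\<forall>i<n. (\<Sum>j\<in>nbs n i. v $ j) = k * v $ i)"
    using mult_row[OF v] by auto
  finally show ?thesis using rows_eqs[OF n] by simp
qed

lemma eqs_cong: assumes n: "n \<ge> 4" and h: "\<forall>i<n. g i = h i" and e: "eqs n g k"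
  shows "eqs n h k"
proof -
  have a: "g 0 = h 0" "g 1 = h 1" "g 2 = h 2" "g (n-1) = h (n-1)" "g (n-2) = h (n-2)" "g (n-3) = h (n-3)"
    using h n by auto
  have b: "g (i-1) = h (i-1) \<and> g (i+1) = h (i+1) \<and> g i = h i" if "i + 3 \<le> n" for i
    using h that by auto
  show ?thesis using e unfolding eqs_def a using b by metis
qed

lemma main_iff: assumes n: "n \<ge> 4"
  shows "main_eigenvalue (D_mat n) k \<longleftrightarrow> (\<exists>g. eqs n g k \<and> (\<Sum>i<n. g i) \<noteq> 0)"
proof
  assume "main_eigenvalue (D_mat n) k"
  then obtain v where ev: "eigenvector (D_mat n) v k" and s: "v \<bullet> vec (dim_row (D_mat n)) (\<lambda>_. 1) \<noteq> 0"
    unfolding main_eigenvalue_def by blast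
  have dr: "dim_row (D_mat n) = n" by (simp add: D_mat_def)
  have v: "v \<in> carrier_vec n" and mv: "D_mat n *\<^sub>v v = k \<cdot>\<^sub>v v" using ev dr unfolding eigenvector_def by auto
  have "v \<bullet> vec n (\<lambda>_. 1) = (\<Sum>i<n. v $ i)"
    using v by (simp add: scalar_prod_def lessThan_atLeast0)
  then show "\<exists>g. eqs n g k \<and> (\<Sum>i<n. g i) \<noteq> 0"
    using s dr mv_eqs[OF n v] mv by (intro exI[of _ "\<lambda>i. v $ i"]) auto
next
  assume "\<exists>g. eqs n g k \<and> (\<Sum>i<n. g i) \<noteq> 0"
  then obtain g where g: "eqs n g k" "(\<Sum>i<n. g i) \<noteq> 0" by blast
  define v where "v = vec n g"
  have v: "v \<in> carrier_vec n" unfolding v_def by simp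
  have dr: "dim_row (D_mat n) = n" by (simp add: D_mat_def)
  have "v \<bullet> vec n (\<lambda>_. 1) = (\<Sum>i<n. g i)"
    unfolding v_def by (simp add: scalar_prod_def lessThan_atLeast0)
  moreover have "v \<noteq> 0\<^sub>v n"
  proof
    assume "v = 0\<^sub>v n"
    then have "\<forall>i<n. g i = 0" unfolding v_def by (metis index_vec index_zero_vec(1))
    then show False using g(2) by simp
  qed
  moreover have "D_mat n *\<^sub>v v = k \<cdot>\<^sub>v v"
  proof -
    have "eqs n (\<lambda>i. v $ i) k"
    proof -
      have "\<forall>i<n. g i = v $ i" unfolding v_def by simp
      then show ?thesis using eqs_cong[OF n _ g(1)] by blast
    qed
    then show ?thesis using mv_eqs[OF n v] by simp
  qed
  ultimately show "main_eigenvalue (D_mat n) k"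
    unfolding main_eigenvalue_def eigenvector_def dr using v g(2) by auto
qed

lemma eqs_m: "eqs (m+4) g k \<longleftrightarrow> g 1 = k * g 0 \<and> g 1 = k * g (m+3) \<and> g 0 + g 2 + g (m+3) = k * g 1 \<and>
     (\<forall>i. 2 \<le> i \<and> i \<le> m+1 \<longrightarrow> g (i-1) + g (i+1) = k * g i) \<and> g (m+1) = k * g (m+2)"
proof -
  have "(m + 4 - 1) = m + 3" "m + 4 - 3 = m + 1" "m + 4 - 2 = m + 2" by auto
  moreover have "(i + 3 \<le> m + 4) \<longleftrightarrow> i \<le> m + 1" for i by auto
  ultimately show ?thesis unfolding eqs_def by (simp add: ac_simps)
qed

lemma U_rec: "U (Suc (Suc j)) k = k * U (Suc j) k - U j k" by simp

lemma path_pair: assumes e: "eqs (m+4) g k"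
  shows "j \<le> m \<Longrightarrow> g (m+2-j) = U j k * g (m+2) \<and> g (m+1-j) = U (Suc j) k * g (m+2)"
proof (induction j)
  case 0 then show ?case using e unfolding eqs_m by simp
next
  case (Suc j)
  then have IH: "g (m+2-j) = U j k * g (m+2)" "g (m+1-j) = U (Suc j) k * g (m+2)" by auto
  define i where "i = m + 1 - j"
  have i: "2 \<le> i" "i \<le> m+1" using Suc.prems unfolding i_def by auto
  have r: "g (i-1) + g (i+1) = k * g i" using e i unfolding eqs_m by blast
  have i1: "i - 1 = m + 1 - Suc j" "i + 1 = m + 2 - j" "m + 2 - Suc j = i" using Suc.prems unfolding i_def by auto
  have "g (m + 1 - Suc j) = k * g i - g (i+1)" using r i1 by simp
  also have "\<dots> = U (Suc (Suc j)) k * g (m+2)"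
  proof -
    have gi: "g i = U (Suc j) k * g (m+2)" unfolding i_def by (rule IH(2))
    have gi1: "g (i+1) = U j k * g (m+2)" unfolding i1(2) by (rule IH(1))
    show ?thesis unfolding gi gi1 U_rec by (simp add: algebra_simps)
  qed
  finally have c2: "g (m + 1 - Suc j) = U (Suc (Suc j)) k * g (m+2)" .
  have c1: "g (m+2 - Suc j) = U (Suc j) k * g (m+2)" using IH(2) by simp
  show ?case using c1 c2 by blast
qed

lemma path: assumes e: "eqs (m+4) g k" and j: "j \<le> m + 1"
  shows "g (m+2-j) = U j k * g (m+2)"
proof (cases j)
  case 0 then show ?thesis using path_pair[OF e, of 0] by simp
next
  case (Suc j')
  then show ?thesis using path_pair[OF e, of j'] j by simp
qed

lemma sum_split: fixes m :: nat shows "(\<Sum>i<m+4. g i) = g 0 + g (m+3) + (\<Sum>j<m+2. g (m+2-j))"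
proof -
  have "m + 4 = Suc (m+3)" by simp
  then have "(\<Sum>i<m+4. g i) = (\<Sum>i<Suc (m+3). g i)" by (rule arg_cong)
  also have "\<dots> = (\<Sum>i<m+3. g i) + g (m+3)" by (rule sum.lessThan_Suc)
  also have "m + 3 = Suc (m+2)" by simp
  then have "(\<Sum>i<m+3. g i) = (\<Sum>i<Suc (m+2). g i)" by (rule arg_cong)
  also have "\<dots> = g 0 + (\<Sum>i<m+2. g (Suc i))" by (rule sum.lessThan_Suc_shift)
  finally have "(\<Sum>i<m+4. g i) = g 0 + (\<Sum>i<m+2. g (Suc i)) + g (m+3)" .
  also have "(\<Sum>i<m+2. g (Suc i)) = (\<Sum>j<m+2. g (Suc (m + 2 - Suc j)))"
    by (rule sum.nat_diff_reindex[symmetric])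
  also have "\<dots> = (\<Sum>j<m+2. g (m+2-j))" by (intro sum.cong) (auto simp: Suc_diff_le)
  finally show ?thesis by (simp only: ac_simps)
qed

lemma sum_eqs: assumes e: "eqs (m+4) g k"
  shows "(\<Sum>i<m+4. g i) = g 0 + g (m+3) + g (m+2) * (\<Sum>j<m+2. U j k)"
proof -
  have h: "(\<Sum>j<m+2. g (m+2-j)) = g (m+2) * (\<Sum>j<m+2. U j k)"
    unfolding sum_distrib_left by (intro sum.cong refl) (use path[OF e] in \<open>simp add: mult.commute\<close>)
  show ?thesis unfolding sum_split h by (rule refl)
qed

definition gc :: "nat \<Rightarrow> real \<Rightarrow> real \<Rightarrow> real \<Rightarrow> nat \<Rightarrow> real" where
  "gc m k x y i = (if i = 0 then x else if i = m + 3 then y else U (m+2-i) k)"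

lemma gc_eqs: assumes "U (Suc m) k = k * x" "U (Suc m) k = k * y" "x + y + U m k = k * U (Suc m) k"
  shows "eqs (m+4) (gc m k x y) k"
  unfolding eqs_m
proof (intro conjI allI impI)
  fix i assume i: "2 \<le> i \<and> i \<le> m + 1"
  have a: "m + 2 - (i - 1) = Suc (Suc (m + 2 - (i+1)))" "m + 2 - i = Suc (m + 2 - (i+1))" using i by auto
  show "gc m k x y (i - 1) + gc m k x y (i + 1) = k * gc m k x y i"
    using i unfolding gc_def a U_rec by auto
next
  have "m + 2 - 1 = Suc m" by simp
  then show "gc m k x y 1 = k * gc m k x y 0" "gc m k x y 1 = k * gc m k x y (m + 3)"
    using assms unfolding gc_def by auto
  have "m + 2 - 2 = m" by simp
  then show "gc m k x y 0 + gc m k x y 2 + gc m k x y (m + 3) = k * gc m k x y 1"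
    using assms unfolding gc_def by auto
  have "m + 2 - (m+1) = Suc 0" by simp
  then show "gc m k x y (m + 1) = k * gc m k x y (m + 2)" unfolding gc_def by simp
qed

lemma gc_sum: "(\<Sum>i<m+4. gc m k x y i) = x + y + (\<Sum>j<m+2. U j k)"
proof -
  have "(\<Sum>j<m+2. gc m k x y (m+2-j)) = (\<Sum>j<m+2. U j k)"
    by (intro sum.cong) (auto simp: gc_def)
  then show ?thesis unfolding sum_split by (simp add: gc_def)
qed

lemma alg1: fixes a b c k S :: real
  assumes k: "k \<noteq> 0" and f: "k*b = 2*a" and s1: "(k-2)*S = b - a - 1" and s2: "2*a/k + S = 0"
    and cas: "a^2 - b*c = 1" and c: "c = k*a - b"
  shows False
proof -
  have kS: "k*S = -2*a" using s2 k by (simp add: field_simps)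
  have "k*((k-2)*S) = k*(b - a - 1)" using s1 by simp
  then have "(k-2)*(k*S) = k*b - k*a - k" by (simp add: algebra_simps)
  then have "(k-2)*(-2*a) = 2*a - k*a - k" using kS f by simp
  then have ak: "a*(k-2) = k" by (simp add: algebra_simps)
  have "a^2 - k*a*b + b^2 = 1" using cas c by (simp add: algebra_simps power2_eq_square)
  then have "k^2*(a^2 - k*a*b + b^2) = k^2" by simp
  moreover have "k^2*(a^2 - k*a*b + b^2) = k^2*a^2 - k^2*a*(k*b) + (k*b)^2"
    by (simp add: power2_eq_square algebra_simps)
  ultimately have "k^2*a^2 - k^2*a*(k*b) + (k*b)^2 = k^2" by simp
  then have "k^2*a^2 - k^2*a*(2*a) + (2*a)^2 = k^2" unfolding f .
  then have "k^2*a^2 - 2*k^2*a^2 + 4*a^2 = k^2" by (simp add: algebra_simps power2_eq_square)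
  moreover have "(a*(k-2))^2 = k^2" using ak by simp
  moreover have i1: "(a*(k-2))^2 = a^2*k^2 - 4*(a^2*k) + 4*a^2" by (simp add: power2_eq_square algebra_simps)
  moreover have i2: "a^2 * (2*k*(2-k)) = 4*(a^2*k) - 2*(a^2*k^2)" by (simp add: power2_eq_square algebra_simps)
  moreover have i3: "k^2*a^2 = a^2*k^2" by simp
  ultimately have "a^2 * (2*k*(2-k)) = 0" by linarith
  then have "a = 0 \<or> k = 2" using k by auto
  then show False using ak k by auto
qed

lemma main_m: "main_eigenvalue (D_mat (m+4)) k \<longleftrightarrow> (\<exists>g. eqs (m+4) g k \<and> (\<Sum>i<m+4. g i) \<noteq> 0)"
  using main_iff[of "m+4" k] by simp

lemma g12: assumes e: "eqs (m+4) g k"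
  shows "g 1 = U (Suc m) k * g (m+2)" "g 2 = U m k * g (m+2)"
proof -
  show "g 1 = U (Suc m) k * g (m+2)" using path[OF e, of "m+1"] by simp
  have "m + 2 - m = 2" by simp
  then show "g 2 = U m k * g (m+2)" using path[OF e, of "m"] by simp
qed

lemma main_nonzero: assumes k: "k \<noteq> 0"
  shows "main_eigenvalue (D_mat (m+4)) k \<longleftrightarrow> U (m+3) k - U (m+1) k = 0"
proof
  assume "main_eigenvalue (D_mat (m+4)) k"
  then obtain g where e: "eqs (m+4) g k" and s: "(\<Sum>i<m+4. g i) \<noteq> 0" unfolding main_m by blast
  define t where "t = g (m+2)"
  define a where "a = U (Suc m) k"
  have E: "g 1 = k * g 0" "g 1 = k * g (m+3)" "g 0 + g 2 + g (m+3) = k * g 1"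
    using e unfolding eqs_m by auto
  have g1: "g 1 = a * t" and g2: "g 2 = U m k * t" using g12[OF e] unfolding a_def t_def by auto
  have g03: "g 0 = g (m+3)" using E(1,2) k by simp
  have sum: "(\<Sum>i<m+4. g i) = g 0 + g (m+3) + t * (\<Sum>j<m+2. U j k)"
    using sum_eqs[OF e] unfolding t_def .
  have t: "t \<noteq> 0"
  proof
    assume "t = 0"
    then have "g 0 = 0" using g1 E(1) k by simp
    then show False using s sum g03 \<open>t = 0\<close> by simp
  qed
  have "k * (g 0 + g 2 + g (m+3)) = k * (k * g 1)" using E(3) by (rule arg_cong)
  moreover have "k * (g 0 + g 2 + g (m+3)) = k * g 0 + k * g 2 + k * g (m+3)" by (simp add: algebra_simps)
  moreover have "k * g 0 = a * t" "k * g (m+3) = a * t" using E(1,2) g1 by auto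
  moreover have "k * g 2 = k * (U m k * t)" using g2 by simp
  moreover have "k * (k * g 1) = k * k * (a * t)" using g1 by simp
  ultimately have "2 * (a*t) + k * (U m k * t) = k * k * (a * t)" by linarith
  then have "(2 * a + k * U m k - k * k * a) * t = 0" by (simp add: algebra_simps)
  then have r: "2 * a + k * U m k = k * k * a" using t by simp
  have "U (m+3) k = k * (k * a - U m k) - a" unfolding a_def by (simp add: numeral_3_eq_3)
  then show "U (m+3) k - U (m+1) k = 0" using r unfolding a_def by (simp add: algebra_simps)
next
  assume F: "U (m+3) k - U (m+1) k = 0"
  define a where "a = U (Suc m) k"
  define b where "b = U (Suc (Suc m)) k"
  have bdef: "b = k * a - U m k" unfolding a_def b_def by simp
  have c3: "U (m+3) k = k * b - a" unfolding a_def b_def by (simp add: numeral_3_eq_3)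
  have f: "k * b = 2 * a" using F c3 unfolding a_def by simp
  have r: "a / k + a / k + U m k = k * a"
  proof -
    have "2 * a + k * U m k = k * (k * a)" using f bdef by (simp add: algebra_simps)
    then show ?thesis using k by (simp add: field_simps)
  qed
  have e: "eqs (m+4) (gc m k (a/k) (a/k)) k"
    by (rule gc_eqs) (use k r in \<open>simp_all add: a_def\<close>)
  have "(\<Sum>i<m+4. gc m k (a/k) (a/k) i) \<noteq> 0"
  proof
    assume "(\<Sum>i<m+4. gc m k (a/k) (a/k) i) = 0"
    then have s2: "2*a/k + (\<Sum>j<m+2. U j k) = 0" unfolding gc_sum by simp
    have s1: "(k-2) * (\<Sum>j<m+2. U j k) = b - a - 1"
      using U_sum[of k "Suc m"] unfolding a_def b_def by simp
    have cas: "a^2 - b * U m k = 1" using U_cassini[of m k] unfolding a_def b_def by simp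
    show False using alg1[OF k f s1 s2 cas] bdef by simp
  qed
  then show "main_eigenvalue (D_mat (m+4)) k" unfolding main_m using e by blast
qed

lemma main_zero: "main_eigenvalue (D_mat (m+4)) 0 \<longleftrightarrow> m mod 4 = 2"
proof
  assume "main_eigenvalue (D_mat (m+4)) 0"
  then obtain g where e: "eqs (m+4) g 0" and s: "(\<Sum>i<m+4. g i) \<noteq> 0" unfolding main_m by blast
  define t where "t = g (m+2)"
  define S where "S = (\<Sum>j<m+2. U j 0)"
  have E: "g 1 = 0" "g 0 + g 2 + g (m+3) = 0"
    using e unfolding eqs_m by auto
  have g1: "g 1 = U (Suc m) 0 * t" and g2: "g 2 = U m 0 * t" using g12[OF e] unfolding t_def by auto
  have sum: "(\<Sum>i<m+4. g i) = - (U m 0 * t) + t * S"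
    using sum_eqs[OF e] E g2 unfolding t_def S_def by simp
  have s1: "-2 * S = U (Suc (Suc m)) 0 - U (Suc m) 0 - 1"
    using U_sum[of 0 "Suc m"] unfolding S_def by simp
  show "m mod 4 = 2"
  proof (rule ccontr)
    assume m: "m mod 4 \<noteq> 2"
    have "odd m \<or> m mod 4 = 0" using m by presburger
    then show False
    proof (elim disjE)
      assume 1: "odd m"
      then have "U (Suc m) 0 \<noteq> 0" by (simp add: U_zero)
      then have "t = 0" using g1 E(1) by simp
      then show False using s sum by simp
    next
      assume 2: "m mod 4 = 0"
      then have "U (Suc m) 0 = 0" "U m 0 = 1" "U (Suc (Suc m)) 0 = -1"
        by (simp_all add: U_zero) presburger+
      then show False using s sum s1 by simp
    qed
  qed
next
  assume m: "m mod 4 = 2"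
  then have u: "U (Suc m) 0 = 0" "U m 0 = -1" "U (Suc (Suc m)) 0 = 1"
    by (simp_all add: U_zero) presburger+
  have e: "eqs (m+4) (gc m 0 1 0) 0"
    by (rule gc_eqs) (use u in simp_all)
  have s1: "-2 * (\<Sum>j<m+2. U j 0) = U (Suc (Suc m)) 0 - U (Suc m) 0 - 1"
    using U_sum[of 0 "Suc m"] by simp
  have "(\<Sum>i<m+4. gc m 0 1 0 i) = 1" unfolding gc_sum using s1 u by simp
  then show "main_eigenvalue (D_mat (m+4)) 0" unfolding main_m using e by force
qed

definition RR :: "nat \<Rightarrow> real set" where
  "RR m = {k. U (m+3) k - U (m+1) k = 0}"

lemma RR_poly: "finite (RR m) \<and> card (RR m) \<le> m + 3"
proof -
  define P where "P = Up (m+3) - Up (m+1)"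
  have ev: "poly P k = U (m+3) k - U (m+1) k" for k unfolding P_def by (simp add: Up_poly)
  have c1: "coeff (Up (m+1)) (m+3) = 0" using Up_deg[of "m+1"] by (intro coeff_eq_0) simp
  have "coeff P (m+3) = 1" unfolding P_def using Up_deg[of "m+3"] c1 by simp
  then have P0: "P \<noteq> 0" by auto
  have dP: "degree P \<le> m + 3" unfolding P_def
    using Up_deg[of "m+3"] Up_deg[of "m+1"] degree_diff_le[of "Up (m+3)" "m+3" "Up (m+1)"] by simp
  have R: "RR m = {k. poly P k = 0}" unfolding RR_def ev ..
  show ?thesis unfolding R using poly_roots_finite[OF P0] card_poly_roots_bound[OF P0] dP by simp
qed

definition th :: "nat \<Rightarrow> nat \<Rightarrow> real" where
  "th m j = real (2*j+1) * pi / real (2*(m+3))"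

lemma th_range: "j < m + 3 \<Longrightarrow> 0 \<le> th m j \<and> th m j \<le> pi"
proof -
  assume j: "j < m + 3"
  have "real (2*j+1) \<le> real (2*(m+3))" using j by simp
  then have "real (2*j+1) / real (2*(m+3)) \<le> 1" by simp
  then have "real (2*j+1) / real (2*(m+3)) * pi \<le> 1 * pi" by (intro mult_right_mono) auto
  then show ?thesis unfolding th_def by (simp add: field_simps)
qed

lemma th_root: "2 * cos (th m j) \<in> RR m"
proof -
  have "U (m+3) k - U (m+1) k = C (m+3) k" for k
    using UC[of "Suc m" k] by (simp add: numeral_3_eq_3)
  moreover have "C (m+3) (2 * cos (th m j)) = 2 * cos (real (m+3) * th m j)" by (rule C_cos)
  moreover have "cos (real (m+3) * th m j) = 0"
  proof -
    have eq: "real (m+3) * th m j = of_int (int (2*j+1)) * (pi/2)"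
      unfolding th_def by (simp add: field_simps)
    show ?thesis unfolding eq
      by (subst cos_zero_iff_int) (intro exI[of _ "int (2*j+1)"], simp)
  qed
  ultimately show ?thesis unfolding RR_def by simp
qed

lemma th_inj: "inj_on (\<lambda>j. 2 * cos (th m j)) {..<m+3}"
proof (rule inj_onI)
  fix i j assume i: "i \<in> {..<m+3}" and j: "j \<in> {..<m+3}" and e: "2 * cos (th m i) = 2 * cos (th m j)"
  have ri: "0 \<le> th m i" "th m i \<le> pi" using i th_range[of i m] by auto
  have rj: "0 \<le> th m j" "th m j \<le> pi" using j th_range[of j m] by auto
  have ce: "cos (th m i) = cos (th m j)" using e by simp
  have eq: "th m i = th m j" by (rule cos_inj_pi[OF ri rj ce])
  have "real (2*i+1) * (pi / real (2*(m+3))) = real (2*j+1) * (pi / real (2*(m+3)))"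
    using eq unfolding th_def times_divide_eq_right .
  then have "real (2*i+1) = real (2*j+1)" by simp
  then show "i = j" by simp
qed

lemma RR_card: "card (RR m) = m + 3"
proof -
  define T where "T = (\<lambda>j. 2 * cos (th m j)) ` {..<m+3}"
  have cT: "card T = m + 3" unfolding T_def using th_inj[of m] by (simp add: card_image)
  have sub: "T \<subseteq> RR m" unfolding T_def using th_root by auto
  have "card T \<le> card (RR m)" using sub RR_poly[of m] by (intro card_mono) auto
  then show ?thesis using RR_poly[of m] cT by simp
qed

lemma RR_zero: "0 \<in> RR m \<longleftrightarrow> even m"
proof -
  have "U (m+3) 0 - U (m+1) 0 = 0 \<longleftrightarrow> even m"
  proof (cases "even m")
    case True then show ?thesis by (simp add: U_zero)
  next
    case False
    then have "(m+3) mod 4 = 0 \<and> (m+1) mod 4 = 2 \<or> (m+3) mod 4 = 2 \<and> (m+1) mod 4 = 0" by presburger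
    then show ?thesis using False by (auto simp add: U_zero)
  qed
  then show ?thesis unfolding RR_def by simp
qed

theorem corollary1p4:
  fixes n :: nat
  assumes "n \<ge> 4"
  shows "card {k. main_eigenvalue (D_mat n) k} = (if 4 dvd n then n - 2 else n - 1)"
proof -
  obtain m where n: "n = m + 4" using assms by (metis add.commute le_Suc_ex)
  have M: "{k. main_eigenvalue (D_mat n) k} = (RR m - {0}) \<union> (if m mod 4 = 2 then {0} else {})"
  proof -
    have "k \<in> {k. main_eigenvalue (D_mat n) k} \<longleftrightarrow> k \<in> (RR m - {0}) \<union> (if m mod 4 = 2 then {0} else {})" for k
    proof (cases "k = 0")
      case True then show ?thesis unfolding n using main_zero[of m] by auto
    next
      case False then show ?thesis unfolding n using main_nonzero[OF False, of m] by (auto simp: RR_def)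
    qed
    then show ?thesis by blast
  qed
  have fin: "finite (RR m)" using RR_poly by blast
  show ?thesis
  proof (cases "even m")
    case False
    have a: "0 \<notin> RR m" using RR_zero[of m] False by blast
    have b: "m mod 4 \<noteq> 2" using False by presburger
    have c: "\<not> 4 dvd n" using False n by presburger
    note a b c
    then show ?thesis unfolding M using RR_card[of m] n by simp
  next
    case True
    then have z: "0 \<in> RR m" using RR_zero by blast
    show ?thesis
    proof (cases "m mod 4 = 2")
      case True
      then have "\<not> 4 dvd n" using n by presburger
      moreover have "(RR m - {0}) \<union> {0} = RR m" using z by auto
      ultimately show ?thesis unfolding M using RR_card[of m] n True by simp
    next
      case False
      then have "4 dvd n" using n \<open>even m\<close> by presburger
      then show ?thesis unfolding M using RR_card[of m] n False z fin by (simp add: card_Diff_singleton)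
    qed
  qed
qed

end
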